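(* An integral domain $D$ is a PvMD if and only if $D$ is essential and $\mathcal{E}(D)$ is closed in $\operatorname{Spec}(D)$ with respect to the constructible topology.
   Context: All rings are commutative with identity. For an integral domain $D$ with quotient field $K$ and nonzero fractional ideal $I$: $(D:I)=\{x\in K:xI\subseteq D\}$, $I^v=(D:(D:I))$, $I^t=\bigcup\{J^v:J\subseteq I \text{ finitely generated}\}$; $t$-ideals are $(0)$ and ideals with $I=I^t$; $t$-maximal ideals are $t$-ideals maximal among proper $t$-ideals. $D$ is a PvMD if $D_{\mathfrak m}$ is a valuation domain for all $t$-maximal $\mathfrak m$. A valuation overring is essential if it equals $D_{\mathfrak p}$ for a prime $\mathfrak p$; $D$ is essential if it is the intersection of a family of essential valuation overrings. $\mathcal{E}(D)=\{\mathfrak p\in\operatorname{Spec}(D): D_{\mathfrak p}\text{ is a valuation domain}\}$. The constructible topology on $\operatorname{Spec}(D)$ is the coarsest topology making every $D(f)=\{\mathfrak p:f\notin\mathfrak p\}$ clopen. *)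

theory Defs
  imports "HOL-Analysis.Analysis"
begin

text \<open>An integral domain is represented as a subring D of a field of type 'a
 (every integral domain embeds in its quotient field).\<close>

definition subring :: "'a::field set \<Rightarrow> bool" where
  "subring D \<longleftrightarrow> 0 \<in> D \<and> 1 \<in> D \<and>
     (\<forall>x\<in>D. \<forall>y\<in>D. x + y \<in> D \<and> x - y \<in> D \<and> x * y \<in> D)"

definition qfield :: "'a::field set \<Rightarrow> 'a set" where
  "qfield D = {a / b | a b. a \<in> D \<and> b \<in> D \<and> b \<noteq> 0}"

definition is_ideal :: "'a::field set \<Rightarrow> 'a set \<Rightarrow> bool" where
  "is_ideal D I \<longleftrightarrow> I \<subseteq> D \<and> 0 \<in> I \<and>
     (\<forall>x\<in>I. \<forall>y\<in>I. x + y \<in> I) \<and> (\<forall>d\<in>D. \<forall>x\<in>I. d * x \<in> I)"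

definition prime_ideal :: "'a::field set \<Rightarrow> 'a set \<Rightarrow> bool" where
  "prime_ideal D P \<longleftrightarrow> is_ideal D P \<and> P \<noteq> D \<and>
     (\<forall>a\<in>D. \<forall>b\<in>D. a * b \<in> P \<longrightarrow> a \<in> P \<or> b \<in> P)"

definition Spec :: "'a::field set \<Rightarrow> 'a set set" where
  "Spec D = {P. prime_ideal D P}"

definition loc :: "'a::field set \<Rightarrow> 'a set \<Rightarrow> 'a set" where
  "loc D P = {a / s | a s. a \<in> D \<and> s \<in> D \<and> s \<notin> P}"

definition valuation_domain :: "'a::field set \<Rightarrow> bool" where
  "valuation_domain V \<longleftrightarrow> subring V \<and>
     (\<forall>x\<in>qfield V. x \<noteq> 0 \<longrightarrow> x \<in> V \<or> inverse x \<in> V)"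

definition colon :: "'a::field set \<Rightarrow> 'a set \<Rightarrow> 'a set" where
  "colon D I = {x \<in> qfield D. \<forall>y\<in>I. x * y \<in> D}"

definition v_op :: "'a::field set \<Rightarrow> 'a set \<Rightarrow> 'a set" where
  "v_op D I = colon D (colon D I)"

definition gen :: "'a::field set \<Rightarrow> 'a set \<Rightarrow> 'a set" where
  "gen D F = {y. \<exists>c. (\<forall>x\<in>F. c x \<in> D) \<and> y = (\<Sum>x\<in>F. c x * x)}"

definition t_op :: "'a::field set \<Rightarrow> 'a set \<Rightarrow> 'a set" where
  "t_op D I = \<Union>{v_op D J | J. \<exists>F. finite F \<and> F \<subseteq> I \<and> J = gen D F \<and> J \<noteq> {0}}"

definition t_ideal :: "'a::field set \<Rightarrow> 'a set \<Rightarrow> bool" where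
  "t_ideal D I \<longleftrightarrow> I = {0} \<or> (is_ideal D I \<and> I \<noteq> {0} \<and> t_op D I = I)"

definition t_maximal :: "'a::field set \<Rightarrow> 'a set \<Rightarrow> bool" where
  "t_maximal D M \<longleftrightarrow> t_ideal D M \<and> M \<noteq> D \<and>
     (\<forall>J. t_ideal D J \<and> J \<noteq> D \<and> M \<subseteq> J \<longrightarrow> J = M)"

definition PvMD :: "'a::field set \<Rightarrow> bool" where
  "PvMD D \<longleftrightarrow> (\<forall>M. t_maximal D M \<longrightarrow> valuation_domain (loc D M))"

definition valuation_overring :: "'a::field set \<Rightarrow> 'a set \<Rightarrow> bool" where
  "valuation_overring D V \<longleftrightarrow> D \<subseteq> V \<and> V \<subseteq> qfield D \<and> valuation_domain V"

definition essential_valuation_overring :: "'a::field set \<Rightarrow> 'a set \<Rightarrow> bool" where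
  "essential_valuation_overring D V \<longleftrightarrow> valuation_overring D V \<and>
     (\<exists>P. prime_ideal D P \<and> V = loc D P)"

definition essential :: "'a::field set \<Rightarrow> bool" where
  "essential D \<longleftrightarrow> (\<exists>\<F>. (\<forall>V\<in>\<F>. essential_valuation_overring D V) \<and>
     D = qfield D \<inter> \<Inter>\<F>)"

definition E_set :: "'a::field set \<Rightarrow> 'a set set" where
  "E_set D = {P \<in> Spec D. valuation_domain (loc D P)}"

definition basic_open :: "'a::field set \<Rightarrow> 'a \<Rightarrow> 'a set set" where
  "basic_open D f = {P \<in> Spec D. f \<notin> P}"

definition constructible_topology :: "'a::field set \<Rightarrow> 'a set topology" where
  "constructible_topology D = subtopology
     (topology_generated_by ({basic_open D f | f. f \<in> D} \<union> {Spec D - basic_open D f | f. f \<in> D}))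
     (Spec D)"

end

theory Submission
  imports Defs
begin


lemma sr:
  assumes "subring D"
  shows sr0: "0 \<in> D" and sr1: "1 \<in> D"
    and sradd: "x \<in> D \<Longrightarrow> y \<in> D \<Longrightarrow> x + y \<in> D"
    and srdiff: "x \<in> D \<Longrightarrow> y \<in> D \<Longrightarrow> x - y \<in> D"
    and srmult: "x \<in> D \<Longrightarrow> y \<in> D \<Longrightarrow> x * y \<in> D"
  using assms unfolding subring_def by auto

lemma qfI: "a \<in> D \<Longrightarrow> b \<in> D \<Longrightarrow> b \<noteq> 0 \<Longrightarrow> a / b \<in> qfield D"
  unfolding qfield_def by blast

lemma D_qf: assumes "subring D" shows "D \<subseteq> qfield D"
proof
  fix x assume "x \<in> D" then show "x \<in> qfield D" using qfI[of x D 1] sr1[OF assms] by simp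
qed

lemma qf_add: assumes "subring D" "x \<in> qfield D" "y \<in> qfield D" shows "x + y \<in> qfield D"
proof -
  obtain a b where ab: "a \<in> D" "b \<in> D" "b \<noteq> 0" "x = a/b" using assms(2) unfolding qfield_def by blast
  obtain c d where cd: "c \<in> D" "d \<in> D" "d \<noteq> 0" "y = c/d" using assms(3) unfolding qfield_def by blast
  have "x + y = (a*d + c*b)/(b*d)" using ab cd by (simp add: field_simps)
  then show ?thesis using ab cd qfI[of "a*d+c*b" D "b*d"] sr[OF assms(1)] by simp
qed

lemma qf_diff: assumes "subring D" "x \<in> qfield D" "y \<in> qfield D" shows "x - y \<in> qfield D"
proof -
  obtain a b where ab: "a \<in> D" "b \<in> D" "b \<noteq> 0" "x = a/b" using assms(2) unfolding qfield_def by blast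
  obtain c d where cd: "c \<in> D" "d \<in> D" "d \<noteq> 0" "y = c/d" using assms(3) unfolding qfield_def by blast
  have "x - y = (a*d - c*b)/(b*d)" using ab cd by (simp add: field_simps)
  then show ?thesis using ab cd qfI[of "a*d-c*b" D "b*d"] sr[OF assms(1)] by simp
qed

lemma qf_mult: assumes "subring D" "x \<in> qfield D" "y \<in> qfield D" shows "x * y \<in> qfield D"
proof -
  obtain a b where ab: "a \<in> D" "b \<in> D" "b \<noteq> 0" "x = a/b" using assms(2) unfolding qfield_def by blast
  obtain c d where cd: "c \<in> D" "d \<in> D" "d \<noteq> 0" "y = c/d" using assms(3) unfolding qfield_def by blast
  have "x * y = (a*c)/(b*d)" using ab cd by (simp add: field_simps)
  then show ?thesis using ab cd qfI[of "a*c" D "b*d"] sr[OF assms(1)] by simp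
qed

lemma qf_div: assumes "subring D" "x \<in> qfield D" "y \<in> qfield D" shows "x / y \<in> qfield D"
proof (cases "y = 0")
  case True then show ?thesis using D_qf[OF assms(1)] sr0[OF assms(1)] by auto
next
  case False
  obtain a b where ab: "a \<in> D" "b \<in> D" "b \<noteq> 0" "x = a/b" using assms(2) unfolding qfield_def by blast
  obtain c d where cd: "c \<in> D" "d \<in> D" "d \<noteq> 0" "y = c/d" using assms(3) unfolding qfield_def by blast
  have "c \<noteq> 0" using False cd by auto
  have "x / y = (a*d)/(b*c)" unfolding ab(4) cd(4) using ab(3) cd(3) \<open>c\<noteq>0\<close> by simp
  then show ?thesis using ab cd \<open>c\<noteq>0\<close> qfI[of "a*d" D "b*c"] sr[OF assms(1)] by simp
qed

lemma subring_qf: assumes "subring D" shows "subring (qfield D)"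
  unfolding subring_def
proof (intro conjI ballI)
  show "0 \<in> qfield D" "1 \<in> qfield D" using D_qf[OF assms] sr0[OF assms] sr1[OF assms] by auto
qed (simp_all add: qf_add[OF assms] qf_diff[OF assms] qf_mult[OF assms])

lemma qf_qf: assumes "subring D" shows "qfield (qfield D) \<subseteq> qfield D"
proof
  fix x assume "x \<in> qfield (qfield D)"
  then obtain a b where "a \<in> qfield D" "b \<in> qfield D" "x = a / b" unfolding qfield_def[of "qfield D"] by blast
  then show "x \<in> qfield D" using qf_div[OF assms] by blast
qed

lemma qf_mono: "A \<subseteq> B \<Longrightarrow> qfield A \<subseteq> qfield B"
  unfolding qfield_def by blast

lemma val_qf: assumes "subring D" shows "valuation_domain (qfield D)"
proof -
  have "x \<in> qfield D" if "x \<in> qfield (qfield D)" for x using qf_qf[OF assms] that by blast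
  moreover have "inverse x \<in> qfield D" if "x \<in> qfield D" for x
  proof -
    have "1 \<in> qfield D" using D_qf[OF assms] sr1[OF assms] by blast
    then have "1 / x \<in> qfield D" using qf_div[OF assms _ that] by blast
    then show ?thesis by (simp add: inverse_eq_divide)
  qed
  ultimately show ?thesis unfolding valuation_domain_def using subring_qf[OF assms] by blast
qed

lemma ideal_one: assumes "is_ideal D I" "1 \<in> I" shows "I = D"
proof -
  have "D \<subseteq> I"
  proof
    fix d assume "d \<in> D" then have "d * 1 \<in> I" using assms unfolding is_ideal_def by blast
    then show "d \<in> I" by simp
  qed
  moreover have "I \<subseteq> D" using assms(1) unfolding is_ideal_def by blast
  ultimately show ?thesis by blast
qed

lemma prime_basic:
  assumes "subring D" "prime_ideal D P"
  shows "0 \<in> P" "1 \<notin> P" "P \<subseteq> D"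
proof -
  show "0 \<in> P" "P \<subseteq> D" using assms(2) unfolding prime_ideal_def is_ideal_def by blast+
  show "1 \<notin> P"
  proof
    assume "1 \<in> P"
    then have "D \<subseteq> P" using ideal_one assms(2) unfolding prime_ideal_def by blast
    then show False using assms(2) unfolding prime_ideal_def is_ideal_def by blast
  qed
qed

lemma loc_sub_qf: assumes "0 \<in> P" shows "loc D P \<subseteq> qfield D"
proof
  fix x assume "x \<in> loc D P"
  then obtain a s where "a \<in> D" "s \<in> D" "s \<notin> P" "x = a / s" unfolding loc_def by blast
  moreover have "s \<noteq> 0" using assms \<open>s \<notin> P\<close> by auto
  ultimately show "x \<in> qfield D" using qfI by blast
qed

lemma D_loc: assumes "subring D" "1 \<notin> P" shows "D \<subseteq> loc D P"
proof
  fix x assume "x \<in> D" then have "x / 1 \<in> loc D P" unfolding loc_def using assms sr1[OF assms(1)] by blast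
  then show "x \<in> loc D P" by simp
qed

lemma loc_anti: assumes "Q \<subseteq> M" shows "loc D M \<subseteq> loc D Q"
proof
  fix x assume "x \<in> loc D M"
  then obtain a s where "a \<in> D" "s \<in> D" "s \<notin> M" "x = a / s" unfolding loc_def by blast
  then show "x \<in> loc D Q" using assms unfolding loc_def by blast
qed

lemma subring_loc: assumes "subring D" "prime_ideal D P" shows "subring (loc D P)"
proof -
  note pb = prime_basic[OF assms]
  have pr: "\<And>s t. s \<in> D \<Longrightarrow> t \<in> D \<Longrightarrow> s \<notin> P \<Longrightarrow> t \<notin> P \<Longrightarrow> s*t \<notin> P"
    using assms(2) unfolding prime_ideal_def by blast
  have nz: "\<And>s. s \<notin> P \<Longrightarrow> s \<noteq> 0" using pb by auto
  have "0 \<in> loc D P" "1 \<in> loc D P" using D_loc[OF assms(1) pb(2)] sr0[OF assms(1)] sr1[OF assms(1)] by auto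
  moreover have "x + y \<in> loc D P \<and> x - y \<in> loc D P \<and> x * y \<in> loc D P"
    if xy: "x \<in> loc D P" "y \<in> loc D P" for x y
  proof -
    obtain a s where as: "a \<in> D" "s \<in> D" "s \<notin> P" "x = a/s" using xy(1) unfolding loc_def by blast
    obtain b t where bt: "b \<in> D" "t \<in> D" "t \<notin> P" "y = b/t" using xy(2) unfolding loc_def by blast
    have st: "s*t \<in> D" "s*t \<notin> P" using pr as bt sr[OF assms(1)] by auto
    have "s \<noteq> 0" "t \<noteq> 0" using nz as bt by auto
    then have e: "x + y = (a * t + b * s) / (s * t)" "x - y = (a * t - b * s) / (s * t)" "x * y = (a * b) / (s * t)"
      using as bt by (simp_all add: field_simps)
    have m: "\<And>u. u \<in> D \<Longrightarrow> u / (s * t) \<in> loc D P" unfolding loc_def using st by blast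
    show ?thesis unfolding e using m as bt sr[OF assms(1)] by simp
  qed
  ultimately show ?thesis unfolding subring_def by simp
qed

lemma qf_loc: assumes "subring D" "prime_ideal D P" shows "qfield (loc D P) = qfield D"
proof
  show "qfield (loc D P) \<subseteq> qfield D"
    using qf_mono[OF loc_sub_qf[OF prime_basic(1)[OF assms]], of D] qf_qf[OF assms(1)] by blast
  show "qfield D \<subseteq> qfield (loc D P)" using qf_mono[OF D_loc[OF assms(1) prime_basic(2)[OF assms]]] .
qed

lemma val_over:
  assumes "subring D" "prime_ideal D Q" "Q \<subseteq> M" "1 \<notin> M" "valuation_domain (loc D M)"
  shows "valuation_domain (loc D Q)"
proof -
  have sub: "loc D M \<subseteq> loc D Q" using loc_anti[OF assms(3)] .
  have qq: "qfield (loc D Q) \<subseteq> qfield (loc D M)"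
    using qf_mono[OF D_loc[OF assms(1,4)]] qf_loc[OF assms(1,2)] by simp
  have v: "\<And>x. x \<in> qfield (loc D M) \<Longrightarrow> x \<noteq> 0 \<Longrightarrow> x \<in> loc D M \<or> inverse x \<in> loc D M"
    using assms(5) unfolding valuation_domain_def by blast
  have "x \<in> loc D Q \<or> inverse x \<in> loc D Q" if "x \<in> qfield (loc D Q)" "x \<noteq> 0" for x
    using v[of x] that qq sub by blast
  then show ?thesis unfolding valuation_domain_def using subring_loc[OF assms(1,2)] by blast
qed


definition dmod :: "'a::field set \<Rightarrow> 'a set \<Rightarrow> bool" where
  "dmod D W \<longleftrightarrow> 0 \<in> W \<and> (\<forall>x\<in>W. \<forall>y\<in>W. x + y \<in> W) \<and> (\<forall>d\<in>D. \<forall>x\<in>W. d * x \<in> W)"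

lemma genI: "(\<forall>x\<in>F. c x \<in> D) \<Longrightarrow> y = (\<Sum>x\<in>F. c x * x) \<Longrightarrow> y \<in> gen D F"
  unfolding gen_def mem_Collect_eq by (intro exI[of _ c]) simp

lemma genE: assumes "y \<in> gen D F" obtains c where "\<forall>x\<in>F. c x \<in> D" "y = (\<Sum>x\<in>F. c x * x)"
  using assms unfolding gen_def by blast

lemma sum_in:
  assumes "finite F" "0 \<in> W" "\<And>x y. x \<in> W \<Longrightarrow> y \<in> W \<Longrightarrow> x + y \<in> W" "\<And>x. x \<in> F \<Longrightarrow> h x \<in> W"
  shows "sum h F \<in> W"
  using assms(1,4)
proof (induction F rule: finite_induct)
  case empty then show ?case using assms(2) by simp
next
  case (insert a F) then show ?case using assms(3) by simp
qed

lemma gen_sub: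
  assumes "finite F" "dmod D W" "F \<subseteq> W" shows "gen D F \<subseteq> W"
proof
  fix y assume "y \<in> gen D F"
  then obtain c where c: "\<forall>x\<in>F. c x \<in> D" "y = (\<Sum>x\<in>F. c x * x)" by (rule genE)
  have w: "0 \<in> W" "\<And>x y. x \<in> W \<Longrightarrow> y \<in> W \<Longrightarrow> x + y \<in> W" "\<And>d x. d \<in> D \<Longrightarrow> x \<in> W \<Longrightarrow> d * x \<in> W"
    using assms(2) unfolding dmod_def by blast+
  have hx: "\<And>x. x \<in> F \<Longrightarrow> c x * x \<in> W" using c(1) assms(3) w(3) by blast
  show "y \<in> W" unfolding c(2) using sum_in[OF assms(1) w(1,2), of "\<lambda>x. c x * x"] hx by blast
qed

lemma in_gen:
  assumes "subring D" "finite F" "x \<in> F" shows "x \<in> gen D F"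
proof -
  let ?c = "\<lambda>y. if y = x then 1 else 0"
  have "(\<Sum>y\<in>F. ?c y * y) = (\<Sum>y\<in>F. if y = x then x else 0)" by (rule sum.cong) auto
  also have "\<dots> = x" using assms(2,3) by simp
  finally have "x = (\<Sum>y\<in>F. ?c y * y)" by simp
  moreover have "\<forall>y\<in>F. ?c y \<in> D" using sr0[OF assms(1)] sr1[OF assms(1)] by simp
  ultimately show ?thesis by (intro genI[of F ?c]) auto
qed

lemma zero_gen: assumes "subring D" shows "0 \<in> gen D F"
proof -
  have "(0::'a) = (\<Sum>y\<in>F. (\<lambda>_. 0) y * y)" by simp
  moreover have "\<forall>y\<in>F. (\<lambda>_. (0::'a)) y \<in> D" using sr0[OF assms] by simp
  ultimately show ?thesis by (intro genI[of F "\<lambda>_. 0"]) auto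
qed

lemma dmod_D: assumes "subring D" shows "dmod D D"
  unfolding dmod_def using sr0[OF assms] sradd[OF assms] srmult[OF assms] by simp

lemma colon_sub: "colon D S \<subseteq> qfield D" unfolding colon_def by blast

lemma dmod_colon: assumes "subring D" shows "dmod D (colon D S)"
proof -
  have "0 \<in> qfield D" using D_qf[OF assms] sr0[OF assms] by blast
  then have "0 \<in> colon D S" unfolding colon_def using sr0[OF assms] by simp
  moreover have "x + y \<in> colon D S" if "x \<in> colon D S" "y \<in> colon D S" for x y
  proof -
    have "x + y \<in> qfield D" using that colon_sub qf_add[OF assms] by blast
    moreover have "(x + y) * z \<in> D" if "z \<in> S" for z
    proof -
      have "x * z \<in> D" "y * z \<in> D" using \<open>z \<in> S\<close> \<open>x \<in> colon D S\<close> \<open>y \<in> colon D S\<close> unfolding colon_def by blast+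
      then show ?thesis using sradd[OF assms] by (simp add: distrib_right)
    qed
    ultimately show ?thesis unfolding colon_def by blast
  qed
  moreover have "d * x \<in> colon D S" if "d \<in> D" "x \<in> colon D S" for d x
  proof -
    have "d * x \<in> qfield D" using that colon_sub qf_mult[OF assms] D_qf[OF assms] by blast
    moreover have "(d * x) * z \<in> D" if "z \<in> S" for z
    proof -
      have "x * z \<in> D" using \<open>z \<in> S\<close> \<open>x \<in> colon D S\<close> unfolding colon_def by blast
      then show ?thesis using srmult[OF assms \<open>d \<in> D\<close>] by (simp add: mult.assoc)
    qed
    ultimately show ?thesis unfolding colon_def by blast
  qed
  ultimately show ?thesis unfolding dmod_def by blast
qed

lemma colon_anti: "S \<subseteq> T \<Longrightarrow> colon D T \<subseteq> colon D S"
  unfolding colon_def by blast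

lemma v_ext: assumes "S \<subseteq> qfield D" shows "S \<subseteq> v_op D S"
proof
  fix x assume x: "x \<in> S"
  have "x * y \<in> D" if y: "y \<in> colon D S" for y
  proof -
    have "y * x \<in> D" using y x unfolding colon_def by blast
    then show ?thesis by (simp add: mult.commute)
  qed
  then show "x \<in> v_op D S" unfolding v_op_def colon_def[of D "colon D S"] using x assms by blast
qed

lemma v_mono: "S \<subseteq> T \<Longrightarrow> v_op D S \<subseteq> v_op D T"
  unfolding v_op_def by (intro colon_anti)

lemma colon_v: assumes "S \<subseteq> qfield D" shows "colon D (v_op D S) = colon D S"
proof
  show "colon D (v_op D S) \<subseteq> colon D S" using colon_anti[OF v_ext[OF assms]] .
  show "colon D S \<subseteq> colon D (v_op D S)" using v_ext[OF colon_sub[of D S]] unfolding v_op_def .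
qed

lemma v_idem: assumes "S \<subseteq> qfield D" shows "v_op D (v_op D S) = v_op D S"
  using colon_v[OF assms] unfolding v_op_def[of D "v_op D S"] by (simp add: v_op_def)

lemma v_sub_qf: "v_op D S \<subseteq> qfield D" unfolding v_op_def by (rule colon_sub)

lemma one_colon: assumes "subring D" "S \<subseteq> D" shows "1 \<in> colon D S"
proof -
  have "1 \<in> qfield D" using D_qf[OF assms(1)] sr1[OF assms(1)] by blast
  moreover have "\<forall>y\<in>S. 1 * y \<in> D" using assms(2) by auto
  ultimately show ?thesis unfolding colon_def by blast
qed

lemma v_sub_D: assumes "subring D" "S \<subseteq> D" shows "v_op D S \<subseteq> D"
proof
  fix x assume "x \<in> v_op D S"
  then have "x * 1 \<in> D" using one_colon[OF assms] unfolding v_op_def colon_def[of D "colon D S"] by blast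
  then show "x \<in> D" by simp
qed

lemma gen_D: assumes "subring D" "finite F" "F \<subseteq> D" shows "gen D F \<subseteq> D"
  using gen_sub[OF assms(2) dmod_D[OF assms(1)] assms(3)] .

lemma colon_gen:
  assumes "subring D" "finite F" "x \<in> qfield D" "\<And>f. f \<in> F \<Longrightarrow> x * f \<in> D"
  shows "x \<in> colon D (gen D F)"
proof -
  have "x * g \<in> D" if g: "g \<in> gen D F" for g
  proof -
    obtain c where c: "\<forall>y\<in>F. c y \<in> D" "g = (\<Sum>y\<in>F. c y * y)" using g by (rule genE)
    have "x * g = (\<Sum>y\<in>F. c y * (x * y))" unfolding c(2) sum_distrib_left by (rule sum.cong) (auto simp: ac_simps)
    also have "\<dots> \<in> D" by (rule sum_in[OF assms(2) sr0[OF assms(1)]]) (use sr[OF assms(1)] c(1) assms(4) in auto)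
    finally show ?thesis .
  qed
  then show ?thesis unfolding colon_def using assms(3) by blast
qed

lemma colon_gen_D: assumes "subring D" "finite F" "x \<in> colon D (gen D F)" "f \<in> F" shows "x * f \<in> D"
  using assms in_gen[OF assms(1,2,4)] unfolding colon_def by blast

lemma gen_nz: assumes "subring D" "gen D F \<noteq> {0}" shows "\<exists>f\<in>F. f \<noteq> 0"
proof (rule ccontr)
  assume "\<not> ?thesis"
  then have "\<forall>f\<in>F. f = 0" by blast
  then have "gen D F \<subseteq> {0}" by (auto elim!: genE intro!: sum.neutral)
  then show False using zero_gen[OF assms(1), of F] assms(2) by blast
qed

lemma gen_nz2: assumes "subring D" "finite F" "f \<in> F" "f \<noteq> 0" shows "gen D F \<noteq> {0}"
  using in_gen[OF assms(1-3)] assms(4) by blast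

lemma t_op_iff: "x \<in> t_op D I \<longleftrightarrow> (\<exists>F. finite F \<and> F \<subseteq> I \<and> gen D F \<noteq> {0} \<and> x \<in> v_op D (gen D F))"
  unfolding t_op_def by blast

lemma ideal_sub_t: assumes "subring D" "is_ideal D I" "I \<noteq> {0}" shows "I \<subseteq> t_op D I"
proof
  fix z assume z: "z \<in> I"
  have "0 \<in> I" using assms(2) unfolding is_ideal_def by blast
  then obtain m where m: "m \<in> I" "m \<noteq> 0" using assms(3) by blast
  let ?F = "{z, m}"
  have fin: "finite ?F" by simp
  have "?F \<subseteq> D" using z m assms(2) unfolding is_ideal_def by blast
  then have "gen D ?F \<subseteq> qfield D" using gen_D[OF assms(1) fin] D_qf[OF assms(1)] by blast
  then have "z \<in> v_op D (gen D ?F)" using v_ext in_gen[OF assms(1) fin, of z] by blast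
  moreover have "gen D ?F \<noteq> {0}" using gen_nz2[OF assms(1) fin, of m] m by simp
  ultimately show "z \<in> t_op D I" unfolding t_op_iff using z m fin by blast
qed


lemma prod_notin:
  assumes "subring D" "prime_ideal D P" "finite A" "\<And>i. i \<in> A \<Longrightarrow> h i \<in> D \<and> h i \<notin> P"
  shows "prod h A \<in> D \<and> prod h A \<notin> P"
  using assms(3,4)
proof (induction A rule: finite_induct)
  case empty then show ?case using sr1[OF assms(1)] prime_basic(2)[OF assms(1,2)] by simp
next
  case (insert a A)
  then have h: "h a \<in> D" "h a \<notin> P" "prod h A \<in> D" "prod h A \<notin> P" by auto
  have "h a * prod h A \<notin> P" using assms(2) h unfolding prime_ideal_def by blast
  then show ?case using insert(1,2) h srmult[OF assms(1)] by simp
qed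

lemma prod_in:
  assumes "subring D" "finite A" "\<And>i. i \<in> A \<Longrightarrow> h i \<in> D"
  shows "prod h A \<in> D"
  using assms(2,3)
proof (induction A rule: finite_induct)
  case empty then show ?case using sr1[OF assms(1)] by simp
next
  case (insert a A) then show ?case using srmult[OF assms(1)] by simp
qed

lemma val_min:
  assumes "subring D" "prime_ideal D P" "valuation_domain (loc D P)"
    "finite G" "G \<noteq> {}" "G \<subseteq> D" "0 \<notin> G"
  shows "\<exists>f0\<in>G. \<forall>f\<in>G. f / f0 \<in> loc D P"
  using assms(4-7)
proof (induction G rule: finite_ne_induct)
  case (singleton x)
  have "x / x = 1" using singleton by simp
  then show ?case using D_loc[OF assms(1) prime_basic(2)[OF assms(1,2)]] sr1[OF assms(1)] by auto
next
  case (insert g G)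
  then obtain f0 where f0: "f0 \<in> G" "\<forall>f\<in>G. f / f0 \<in> loc D P" by auto
  let ?V = "loc D P"
  have DV: "D \<subseteq> ?V" using D_loc[OF assms(1) prime_basic(2)[OF assms(1,2)]] .
  have srV: "subring ?V" using subring_loc[OF assms(1,2)] .
  have g: "g \<in> D" "g \<noteq> 0" "f0 \<in> D" "f0 \<noteq> 0" using insert f0 by auto
  have "g / f0 \<in> qfield ?V" using qfI[of g ?V f0] g DV by blast
  moreover have "g / f0 \<noteq> 0" using g by simp
  ultimately have "g / f0 \<in> ?V \<or> inverse (g / f0) \<in> ?V" using assms(3) unfolding valuation_domain_def by blast
  then show ?case
  proof
    assume "g / f0 \<in> ?V" then show ?thesis using f0 by auto
  next
    assume "inverse (g / f0) \<in> ?V"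
    then have i: "f0 / g \<in> ?V" by simp
    have "\<forall>f\<in>insert g G. f / g \<in> ?V"
    proof
      fix f assume "f \<in> insert g G"
      then show "f / g \<in> ?V"
      proof
        assume "f = g" then show ?thesis using g DV sr1[OF assms(1)] by auto
      next
        assume "f \<in> G"
        then have "f / f0 \<in> ?V" using f0 by blast
        then have "(f / f0) * (f0 / g) \<in> ?V" using srmult[OF srV] i by blast
        then show ?thesis using g by simp
      qed
    qed
    then show ?thesis by blast
  qed
qed

lemma hf:
  assumes sD: "subring D" and pP: "prime_ideal D P" and vP: "valuation_domain (loc D P)"
    and fin: "finite F" and FP: "F \<subseteq> P" and gnz: "gen D F \<noteq> {0}" and x: "x \<in> v_op D (gen D F)"
  shows "x \<in> P"
proof (rule ccontr)
  assume xP: "x \<notin> P"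
  let ?V = "loc D P"
  note pb = prime_basic[OF sD pP]
  have FD: "F \<subseteq> D" using FP pb by blast
  obtain f1 where f1: "f1 \<in> F" "f1 \<noteq> 0" using gen_nz[OF sD gnz] by blast
  obtain f0 where f0: "f0 \<in> F - {0}" "\<forall>f\<in>F - {0}. f / f0 \<in> ?V"
    using val_min[OF sD pP vP, of "F - {0}"] fin FD f1 by blast
  have f0': "f0 \<in> P" "f0 \<in> D" "f0 \<noteq> 0" using f0 FP FD by auto
  have all: "\<forall>f\<in>F. f / f0 \<in> ?V"
  proof
    fix f assume "f \<in> F"
    show "f / f0 \<in> ?V"
    proof (cases "f = 0")
      case True then show ?thesis using D_loc[OF sD pb(2)] sr0[OF sD] by auto
    next
      case False then show ?thesis using f0 \<open>f \<in> F\<close> by blast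
    qed
  qed
  have "\<forall>f\<in>F. \<exists>a. \<exists>s. a \<in> D \<and> s \<in> D \<and> s \<notin> P \<and> f / f0 = a / s"
    using all unfolding loc_def by blast
  then obtain a where "\<forall>f\<in>F. \<exists>s. a f \<in> D \<and> s \<in> D \<and> s \<notin> P \<and> f / f0 = a f / s"
    using bchoice[of F] by (metis (no_types, lifting))
  then obtain s where as: "\<forall>f\<in>F. a f \<in> D \<and> s f \<in> D \<and> s f \<notin> P \<and> f / f0 = a f / s f"
    using bchoice[of F] by (metis (no_types, lifting))
  define s0 where "s0 = prod s F"
  have s0: "s0 \<in> D" "s0 \<notin> P" using prod_notin[OF sD pP fin, of s] as unfolding s0_def by blast+
  define y where "y = s0 / f0"
  have yq: "y \<in> qfield D" unfolding y_def using qfI s0 f0' by blast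
  have yf: "y * f \<in> D" if f: "f \<in> F" for f
  proof -
    have sf: "s f \<noteq> 0" using as f pb(1) by fastforce
    have s0e: "s0 = s f * prod s (F - {f})" unfolding s0_def using prod.remove[OF fin f] .
    then have "y * f = s0 * (f / f0)" unfolding y_def by simp
    also have "\<dots> = s0 * (a f / s f)" using as f by simp
    also have "\<dots> = a f * prod s (F - {f})" using s0e sf by simp
    also have "\<dots> \<in> D" using srmult[OF sD] as f prod_in[OF sD, of "F - {f}" s] fin by auto
    finally show ?thesis .
  qed
  have "y \<in> colon D (gen D F)" using colon_gen[OF sD fin yq yf] .
  then have d: "x * y \<in> D" using x unfolding v_op_def colon_def[of D "colon D (gen D F)"] by blast
  have xD: "x \<in> D" using v_sub_D[OF sD gen_D[OF sD fin FD]] x by blast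
  have "x * y * f0 \<in> P" using pP d f0' unfolding prime_ideal_def is_ideal_def by blast
  moreover have "x * y * f0 = x * s0" unfolding y_def using f0' by simp
  ultimately have "x * s0 \<in> P" by simp
  then show False using pP xD s0 xP unfolding prime_ideal_def by blast
qed


definition good :: "'a::field set \<Rightarrow> 'a set \<Rightarrow> bool" where
  "good D K \<longleftrightarrow> (\<forall>F. finite F \<and> F \<subseteq> K \<and> gen D F \<noteq> {0} \<longrightarrow> 1 \<notin> v_op D (gen D F))"

lemma ideal_sub: "is_ideal D K \<Longrightarrow> K \<subseteq> D" unfolding is_ideal_def by blast
lemma ideal_0: "is_ideal D K \<Longrightarrow> 0 \<in> K" unfolding is_ideal_def by blast
lemma ideal_add: "is_ideal D K \<Longrightarrow> x \<in> K \<Longrightarrow> y \<in> K \<Longrightarrow> x + y \<in> K" unfolding is_ideal_def by blast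
lemma ideal_mult: "is_ideal D K \<Longrightarrow> d \<in> D \<Longrightarrow> x \<in> K \<Longrightarrow> d * x \<in> K" unfolding is_ideal_def by blast

lemma is_idealI:
  assumes "K \<subseteq> D" "0 \<in> K" "\<And>x y. x \<in> K \<Longrightarrow> y \<in> K \<Longrightarrow> x + y \<in> K" "\<And>d x. d \<in> D \<Longrightarrow> x \<in> K \<Longrightarrow> d * x \<in> K"
  shows "is_ideal D K"
  unfolding is_ideal_def using assms by blast

lemma gen_qf: assumes "subring D" "finite F" "F \<subseteq> D" shows "gen D F \<subseteq> qfield D"
  using gen_D[OF assms] D_qf[OF assms(1)] by blast

lemma t_ideal_good:
  assumes sD: "subring D" and t: "t_ideal D K" "K \<noteq> D" "K \<noteq> {0}" shows "good D K" "is_ideal D K"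
proof -
  have K: "is_ideal D K" "t_op D K = K" using t unfolding t_ideal_def by auto
  show "is_ideal D K" using K(1) .
  show "good D K" unfolding good_def
  proof (intro allI impI)
    fix F assume F: "finite F \<and> F \<subseteq> K \<and> gen D F \<noteq> {0}"
    show "1 \<notin> v_op D (gen D F)"
    proof
      assume "1 \<in> v_op D (gen D F)"
      then have "1 \<in> t_op D K" unfolding t_op_iff using F by blast
      then have "1 \<in> K" using K by simp
      then show False using ideal_one[OF K(1)] t(2) by blast
    qed
  qed
qed

lemma tmax_exists:
  assumes sD: "subring D" and J: "is_ideal D J" "J \<noteq> {0}" "good D J"
  shows "\<exists>M. t_maximal D M \<and> J \<subseteq> M"
proof -
  define A where "A = {K. is_ideal D K \<and> J \<subseteq> K \<and> good D K}"
  have "\<forall>C\<in>chains A. \<exists>U\<in>A. \<forall>X\<in>C. X \<subseteq> U"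
  proof
    fix C assume C: "C \<in> chains A"
    show "\<exists>U\<in>A. \<forall>X\<in>C. X \<subseteq> U"
    proof (cases "C = {}")
      case True then show ?thesis using J unfolding A_def by blast
    next
      case False
      have CA: "C \<subseteq> A" and ch: "chain\<^sub>\<subseteq> C" using C unfolding chains_def by auto
      then have sch: "subset.chain UNIV C" using chain_subset_alt_def by blast
      have mem: "is_ideal D c" "J \<subseteq> c" "good D c" if "c \<in> C" for c using that CA unfolding A_def by auto
      have "is_ideal D (\<Union>C)"
      proof (rule is_idealI)
        show "\<Union>C \<subseteq> D" using mem(1) ideal_sub by blast
        show "0 \<in> \<Union>C" using mem(1) ideal_0 False by blast
        show "x + y \<in> \<Union>C" if xy: "x \<in> \<Union>C" "y \<in> \<Union>C" for x y
        proof -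
          obtain c1 c2 where c: "c1 \<in> C" "c2 \<in> C" "x \<in> c1" "y \<in> c2" using xy by blast
          then have "c1 \<subseteq> c2 \<or> c2 \<subseteq> c1" using ch unfolding chain_subset_def by blast
          then show ?thesis using c mem(1) ideal_add by blast
        qed
        show "d * x \<in> \<Union>C" if "d \<in> D" "x \<in> \<Union>C" for d x
          using that mem(1) ideal_mult by blast
      qed
      moreover have "J \<subseteq> \<Union>C" using mem(2) False by blast
      moreover have "good D (\<Union>C)" unfolding good_def
      proof (intro allI impI)
        fix F assume F: "finite F \<and> F \<subseteq> \<Union>C \<and> gen D F \<noteq> {0}"
        then obtain c where "c \<in> C" "F \<subseteq> c" using finite_subset_Union_chain[of F C UNIV] sch False by blast
        then show "1 \<notin> v_op D (gen D F)" using mem(3) F unfolding good_def by blast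
      qed
      ultimately have "\<Union>C \<in> A" unfolding A_def by blast
      then show ?thesis by blast
    qed
  qed
  then have "\<exists>M\<in>A. \<forall>X\<in>A. M \<subseteq> X \<longrightarrow> X = M" by (rule Zorn_Lemma2)
  then obtain M where M0: "M \<in> A" "\<forall>X\<in>A. M \<subseteq> X \<longrightarrow> X = M" by blast
  have M: "M \<in> A" "\<And>X. X \<in> A \<Longrightarrow> M \<subseteq> X \<Longrightarrow> X = M" using M0 by auto
  have Mi: "is_ideal D M" "J \<subseteq> M" "good D M" using M(1) unfolding A_def by blast+
  have MD: "M \<subseteq> D" using ideal_sub[OF Mi(1)] .
  have Mnz: "M \<noteq> {0}" using Mi(2) J(2) ideal_0[OF J(1)] by blast
  have gM: "1 \<notin> v_op D (gen D F)" if "finite F" "F \<subseteq> M" "gen D F \<noteq> {0}" for F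
    using Mi(3) that unfolding good_def by blast
  have tM: "t_op D M \<subseteq> M"
  proof
    fix x assume "x \<in> t_op D M"
    then obtain F where F: "finite F" "F \<subseteq> M" "gen D F \<noteq> {0}" "x \<in> v_op D (gen D F)" unfolding t_op_iff by blast
    have FD: "F \<subseteq> D" using F MD by blast
    have xD: "x \<in> D" using v_sub_D[OF sD gen_D[OF sD F(1) FD]] F(4) by blast
    define M' where "M' = {m + d * x | m d. m \<in> M \<and> d \<in> D}"
    have MM': "M \<subseteq> M'"
    proof
      fix m assume "m \<in> M" then have "m + 0 * x \<in> M'" unfolding M'_def using sr0[OF sD] by blast
      then show "m \<in> M'" by simp
    qed
    have xM': "x \<in> M'"
    proof -
      have "0 + 1 * x \<in> M'" unfolding M'_def using sr1[OF sD] ideal_0[OF Mi(1)] by blast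
      then show ?thesis by simp
    qed
    have iM': "is_ideal D M'"
    proof (rule is_idealI)
      show "M' \<subseteq> D" unfolding M'_def using MD xD sradd[OF sD] srmult[OF sD] by blast
      show "0 \<in> M'" using MM' ideal_0[OF Mi(1)] by blast
      show "u + v \<in> M'" if uv: "u \<in> M'" "v \<in> M'" for u v
      proof -
        obtain m1 d1 where 1: "m1 \<in> M" "d1 \<in> D" "u = m1 + d1 * x" using uv(1) unfolding M'_def by blast
        obtain m2 d2 where 2: "m2 \<in> M" "d2 \<in> D" "v = m2 + d2 * x" using uv(2) unfolding M'_def by blast
        have "u + v = (m1 + m2) + (d1 + d2) * x" using 1 2 by (simp add: algebra_simps)
        moreover have "m1 + m2 \<in> M" "d1 + d2 \<in> D" using 1 2 ideal_add[OF Mi(1)] sradd[OF sD] by auto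
        ultimately show ?thesis unfolding M'_def by blast
      qed
      show "d * u \<in> M'" if du: "d \<in> D" "u \<in> M'" for d u
      proof -
        obtain m1 d1 where 1: "m1 \<in> M" "d1 \<in> D" "u = m1 + d1 * x" using du(2) unfolding M'_def by blast
        have "d * u = d * m1 + (d * d1) * x" using 1 by (simp add: algebra_simps)
        moreover have "d * m1 \<in> M" "d * d1 \<in> D" using 1 du(1) ideal_mult[OF Mi(1)] srmult[OF sD] by auto
        ultimately show ?thesis unfolding M'_def by blast
      qed
    qed
    have gM': "good D M'" unfolding good_def
    proof (intro allI impI)
      fix G assume G: "finite G \<and> G \<subseteq> M' \<and> gen D G \<noteq> {0}"
      have "\<forall>g\<in>G. \<exists>m d. m \<in> M \<and> d \<in> D \<and> g = m + d * x" using G unfolding M'_def by blast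
      then obtain mm where "\<forall>g\<in>G. \<exists>d. mm g \<in> M \<and> d \<in> D \<and> g = mm g + d * x"
        using bchoice[of G] by (metis (no_types, lifting))
      then obtain dd where md: "\<forall>g\<in>G. mm g \<in> M \<and> dd g \<in> D \<and> g = mm g + dd g * x"
        using bchoice[of G] by (metis (no_types, lifting))
      define H where "H = F \<union> mm ` G"
      have Hf: "finite H" unfolding H_def using F(1) G by blast
      have HM: "H \<subseteq> M" unfolding H_def using F(2) md by blast
      have HD: "H \<subseteq> D" using HM MD by blast
      obtain f where f: "f \<in> F" "f \<noteq> 0" using gen_nz[OF sD F(3)] by blast
      have Hnz: "gen D H \<noteq> {0}" using gen_nz2[OF sD Hf, of f] f unfolding H_def by blast
      define W where "W = v_op D (gen D H)"
      have gHq: "gen D H \<subseteq> qfield D" using gen_qf[OF sD Hf HD] .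
      have Wq: "W \<subseteq> qfield D" unfolding W_def by (rule v_sub_qf)
      have dW: "dmod D W" unfolding W_def v_op_def by (rule dmod_colon[OF sD])
      have HW: "H \<subseteq> W" unfolding W_def using in_gen[OF sD Hf] v_ext[OF gHq] by blast
      have "gen D F \<subseteq> W" using gen_sub[OF F(1) dW] HW unfolding H_def by blast
      then have "v_op D (gen D F) \<subseteq> v_op D W" by (rule v_mono)
      also have "\<dots> = W" unfolding W_def using v_idem[OF gHq] .
      finally have xW: "x \<in> W" using F(4) by blast
      have GW: "G \<subseteq> W"
      proof
        fix g assume "g \<in> G"
        then have g: "mm g \<in> M" "dd g \<in> D" "g = mm g + dd g * x" using md by auto
        have "mm g \<in> W" using HW g(1) \<open>g \<in> G\<close> unfolding H_def by blast
        moreover have "dd g * x \<in> W" using dW g(2) xW unfolding dmod_def by blast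
        ultimately show "g \<in> W" using dW g(3) unfolding dmod_def by metis
      qed
      have "gen D G \<subseteq> W" using gen_sub[OF _ dW GW] G by blast
      then have "v_op D (gen D G) \<subseteq> v_op D W" by (rule v_mono)
      also have "\<dots> = W" unfolding W_def using v_idem[OF gHq] .
      finally have "v_op D (gen D G) \<subseteq> W" .
      moreover have "1 \<notin> W" unfolding W_def using gM[OF Hf HM Hnz] .
      ultimately show "1 \<notin> v_op D (gen D G)" by blast
    qed
    have "M' \<in> A" unfolding A_def using iM' gM' MM' Mi(2) by blast
    then have "M' = M" using M(2) MM' by blast
    then show "x \<in> M" using xM' by simp
  qed
  have tM2: "t_op D M = M" using tM ideal_sub_t[OF sD Mi(1) Mnz] by blast
  have MnD: "M \<noteq> D"
  proof
    assume "M = D"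
    then have 1: "{1} \<subseteq> M" using sr1[OF sD] by blast
    have "1 \<in> gen D {1}" using in_gen[OF sD, of "{1}" 1] by simp
    moreover have "gen D {1} \<subseteq> qfield D" using gen_qf[OF sD, of "{1}"] sr1[OF sD] by simp
    ultimately have "1 \<in> v_op D (gen D {1})" using v_ext by blast
    moreover have "gen D {1} \<noteq> {0}" using gen_nz2[OF sD, of "{1}" 1] by simp
    ultimately show False using gM[of "{1}"] 1 by blast
  qed
  have "t_maximal D M" unfolding t_maximal_def
  proof (intro conjI allI impI)
    show "t_ideal D M" unfolding t_ideal_def using Mi(1) Mnz tM2 by blast
    show "M \<noteq> D" by (rule MnD)
    fix J' assume J': "t_ideal D J' \<and> J' \<noteq> D \<and> M \<subseteq> J'"
    have "J' \<noteq> {0}" using J' Mnz ideal_0[OF Mi(1)] by blast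
    then have "good D J'" "is_ideal D J'" using t_ideal_good[OF sD] J' by blast+
    then have "J' \<in> A" unfolding A_def using J' Mi(2) by blast
    then show "J' = M" using M(2) J' by blast
  qed
  then show ?thesis using Mi(2) by blast
qed


definition bas :: "'a::field set \<Rightarrow> 'a set set set" where
  "bas D = {basic_open D f | f. f \<in> D} \<union> {Spec D - basic_open D f | f. f \<in> D}"

lemma ct_eq: "constructible_topology D = subtopology (topology_generated_by (bas D)) (Spec D)"
  unfolding constructible_topology_def bas_def ..

lemma Spec_prime: "P \<in> Spec D \<longleftrightarrow> prime_ideal D P" unfolding Spec_def by simp

lemma E_iff: "P \<in> E_set D \<longleftrightarrow> prime_ideal D P \<and> valuation_domain (loc D P)"
  unfolding E_set_def Spec_def by simp

lemma topspace_ct: assumes sD: "subring D" shows "topspace (constructible_topology D) = Spec D"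
proof -
  have "basic_open D 0 = {}" unfolding basic_open_def using prime_basic(1)[OF sD] Spec_prime by blast
  then have "Spec D \<in> bas D" unfolding bas_def using sr0[OF sD] by (metis (mono_tags, lifting) Diff_empty UnCI mem_Collect_eq)
  then have "Spec D \<subseteq> \<Union>(bas D)" by blast
  moreover have "\<Union>(bas D) \<subseteq> Spec D" unfolding bas_def basic_open_def by blast
  ultimately show ?thesis unfolding ct_eq by simp
qed

lemma closed_ct:
  assumes sD: "subring D"
  shows "closedin (constructible_topology D) X \<longleftrightarrow>
     X \<subseteq> Spec D \<and> (\<exists>V. generate_topology_on (bas D) V \<and> Spec D - X = V \<inter> Spec D)"
  unfolding closedin_def topspace_ct[OF sD] unfolding ct_eq openin_subtopology openin_topology_generated_by_iff
  by simp

definition NB :: "'a::field set \<Rightarrow> 'a set \<Rightarrow> 'a set set" where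
  "NB D F = {P \<in> Spec D. F \<subseteq> P}"

lemma NB_open: assumes "finite F" "F \<noteq> {}" "F \<subseteq> D" shows "generate_topology_on (bas D) (NB D F)"
  using assms
proof (induction F rule: finite_ne_induct)
  case (singleton f)
  have "NB D {f} = Spec D - basic_open D f" unfolding NB_def basic_open_def by blast
  moreover have "Spec D - basic_open D f \<in> bas D" unfolding bas_def using singleton by blast
  ultimately show ?case by (simp add: generate_topology_on.Basis)
next
  case (insert f F)
  have "NB D (insert f F) = NB D {f} \<inter> NB D F" unfolding NB_def by blast
  moreover have "NB D {f} = Spec D - basic_open D f" unfolding NB_def basic_open_def by blast
  moreover have "Spec D - basic_open D f \<in> bas D" unfolding bas_def using insert by blast
  ultimately have g1: "generate_topology_on (bas D) (NB D {f})" by (simp add: generate_topology_on.Basis)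
  have g2: "generate_topology_on (bas D) (NB D F)" using insert by simp
  show ?case unfolding \<open>NB D (insert f F) = _\<close> using g1 g2 by (rule generate_topology_on.Int)
qed

lemma nbhd:
  assumes "generate_topology_on (bas D) V" "Q \<in> V"
  shows "\<exists>B A. finite B \<and> finite A \<and> B \<subseteq> Q \<and> A \<subseteq> D \<and> A \<inter> Q = {} \<and>
            {P \<in> Spec D. B \<subseteq> P \<and> A \<inter> P = {}} \<subseteq> V"
  using assms
proof (induction rule: generate_topology_on.induct)
  case Empty then show ?case by simp
next
  case (Int a b)
  have "Q \<in> a" "Q \<in> b" using Int.prems by auto
  obtain B1 A1 where
    1: "finite B1" "finite A1" "B1 \<subseteq> Q" "A1 \<subseteq> D" "A1 \<inter> Q = {}" "{P \<in> Spec D. B1 \<subseteq> P \<and> A1 \<inter> P = {}} \<subseteq> a"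
    using Int.IH(1)[OF \<open>Q \<in> a\<close>] by blast
  obtain B2 A2 where
    2: "finite B2" "finite A2" "B2 \<subseteq> Q" "A2 \<subseteq> D" "A2 \<inter> Q = {}" "{P \<in> Spec D. B2 \<subseteq> P \<and> A2 \<inter> P = {}} \<subseteq> b"
    using Int.IH(2)[OF \<open>Q \<in> b\<close>] by blast
  have s12: "{P \<in> Spec D. B1 \<union> B2 \<subseteq> P \<and> (A1 \<union> A2) \<inter> P = {}} \<subseteq> a \<inter> b"
  proof
    fix P assume "P \<in> {P \<in> Spec D. B1 \<union> B2 \<subseteq> P \<and> (A1 \<union> A2) \<inter> P = {}}"
    then have "P \<in> {P \<in> Spec D. B1 \<subseteq> P \<and> A1 \<inter> P = {}}" "P \<in> {P \<in> Spec D. B2 \<subseteq> P \<and> A2 \<inter> P = {}}" by auto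
    then show "P \<in> a \<inter> b" using 1(6) 2(6) by blast
  qed
  have f12: "finite (B1 \<union> B2)" "finite (A1 \<union> A2)" "B1 \<union> B2 \<subseteq> Q" "A1 \<union> A2 \<subseteq> D" "(A1 \<union> A2) \<inter> Q = {}"
    using 1 2 by auto
  show ?case apply (rule exI[of _ "B1 \<union> B2"], rule exI[of _ "A1 \<union> A2"]) using s12 f12 by simp
next
  case (UN K)
  obtain k where k: "k \<in> K" "Q \<in> k" using UN.prems by blast
  then obtain B A where BA: "finite B" "finite A" "B \<subseteq> Q" "A \<subseteq> D" "A \<inter> Q = {}" "{P \<in> Spec D. B \<subseteq> P \<and> A \<inter> P = {}} \<subseteq> k"
    using UN.IH[OF k] by blast
  have "{P \<in> Spec D. B \<subseteq> P \<and> A \<inter> P = {}} \<subseteq> \<Union>K" using BA(6) k(1) by blast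
  then show ?case apply (rule_tac exI[of _ B], rule_tac exI[of _ A]) using BA by simp
next
  case (Basis s)
  obtain f where f: "f \<in> D" "s = basic_open D f \<or> s = Spec D - basic_open D f" using Basis.hyps unfolding bas_def by blast
  show ?case
  proof (cases "s = basic_open D f")
    case True
    then have "f \<notin> Q" using Basis.prems unfolding basic_open_def by blast
    show ?thesis
      by (rule exI[of _ "{}"], rule exI[of _ "{f}"]) (use f True \<open>f \<notin> Q\<close> in \<open>auto simp: basic_open_def\<close>)
  next
    case False
    then have s: "s = Spec D - basic_open D f" using f by blast
    then have "f \<in> Q" using Basis.prems unfolding basic_open_def by blast
    show ?thesis
      by (rule exI[of _ "{f}"], rule exI[of _ "{}"]) (use s \<open>f \<in> Q\<close> in \<open>auto simp: basic_open_def\<close>)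
  qed
qed


definition sep :: "'a set set \<Rightarrow> 'a set \<Rightarrow> 'a set \<Rightarrow> bool" where
  "sep E B A \<longleftrightarrow> (\<exists>P\<in>E. B \<subseteq> P \<and> A \<inter> P = {})"

definition okp :: "'a set set \<Rightarrow> (bool \<times> 'a) set \<Rightarrow> bool" where
  "okp E T \<longleftrightarrow> (\<forall>B A. finite B \<and> finite A \<and> B \<subseteq> {x. (True, x) \<in> T} \<and> A \<subseteq> {x. (False, x) \<in> T} \<longrightarrow> sep E B A)"

lemma patch:
  assumes sD: "subring D" and ES: "E \<subseteq> Spec D"
    and cl: "\<And>Q. Q \<in> Spec D \<Longrightarrow> Q \<notin> E \<Longrightarrow> \<exists>B A. finite B \<and> finite A \<and> B \<subseteq> Q \<and> A \<subseteq> D \<and> A \<inter> Q = {} \<and> \<not> sep E B A"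
    and MD: "M \<subseteq> D"
    and fip: "\<And>B. finite B \<Longrightarrow> B \<subseteq> M \<Longrightarrow> \<exists>P\<in>E. B \<subseteq> P"
  shows "\<exists>Q\<in>E. M \<subseteq> Q"
proof -
  have Epr: "prime_ideal D P" if "P \<in> E" for P using that ES Spec_prime by blast
  define T0 where "T0 = Pair True ` M \<union> {(False, 1)}"
  define A where "A = {T. T0 \<subseteq> T \<and> snd ` T \<subseteq> D \<and> okp E T}"
  have okT0: "okp E T0" unfolding okp_def
  proof (intro allI impI)
    fix B A assume BA: "finite B \<and> finite A \<and> B \<subseteq> {x. (True, x) \<in> T0} \<and> A \<subseteq> {x. (False, x) \<in> T0}"
    then have "B \<subseteq> M" "A \<subseteq> {1}" unfolding T0_def by auto
    then obtain P where P: "P \<in> E" "B \<subseteq> P" using fip BA by blast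
    have "1 \<notin> P" using prime_basic(2)[OF sD Epr[OF P(1)]] .
    then show "sep E B A" unfolding sep_def using P \<open>A \<subseteq> {1}\<close> by blast
  qed
  have T0A: "T0 \<in> A" unfolding A_def using okT0 MD sr1[OF sD] unfolding T0_def by auto
  have "\<forall>C\<in>chains A. \<exists>U\<in>A. \<forall>X\<in>C. X \<subseteq> U"
  proof
    fix C assume C: "C \<in> chains A"
    show "\<exists>U\<in>A. \<forall>X\<in>C. X \<subseteq> U"
    proof (cases "C = {}")
      case True then show ?thesis using T0A by blast
    next
      case False
      have CA: "C \<subseteq> A" and ch: "chain\<^sub>\<subseteq> C" using C unfolding chains_def by auto
      then have sch: "subset.chain UNIV C" using chain_subset_alt_def by blast
      have mem: "T0 \<subseteq> c" "snd ` c \<subseteq> D" "okp E c" if "c \<in> C" for c using that CA unfolding A_def by auto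
      have "okp E (\<Union>C)" unfolding okp_def
      proof (intro allI impI)
        fix B A' assume BA: "finite B \<and> finite A' \<and> B \<subseteq> {x. (True, x) \<in> \<Union>C} \<and> A' \<subseteq> {x. (False, x) \<in> \<Union>C}"
        let ?X = "Pair True ` B \<union> Pair False ` A'"
        have "finite ?X" "?X \<subseteq> \<Union>C" using BA by auto
        then obtain c where c: "c \<in> C" "?X \<subseteq> c" using finite_subset_Union_chain[of ?X C UNIV] sch False by blast
        then have "B \<subseteq> {x. (True, x) \<in> c}" "A' \<subseteq> {x. (False, x) \<in> c}" by auto
        then show "sep E B A'" using mem(3)[OF c(1)] BA unfolding okp_def by blast
      qed
      moreover have "T0 \<subseteq> \<Union>C" using mem(1) False by blast
      moreover have "snd ` \<Union>C \<subseteq> D" using mem(2) by blast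
      ultimately have "\<Union>C \<in> A" unfolding A_def by blast
      then show ?thesis by blast
    qed
  qed
  then have "\<exists>T\<in>A. \<forall>X\<in>A. T \<subseteq> X \<longrightarrow> X = T" by (rule Zorn_Lemma2)
  then obtain T where T0: "T \<in> A" "\<forall>X\<in>A. T \<subseteq> X \<longrightarrow> X = T" by blast
  have TA: "T0 \<subseteq> T" "snd ` T \<subseteq> D" "okp E T" using T0(1) unfolding A_def by blast+
  define I where "I = {x. (True, x) \<in> T}"
  define S where "S = {x. (False, x) \<in> T}"
  have ok: "sep E B A" if "finite B" "finite A" "B \<subseteq> I" "A \<subseteq> S" for B A
    using TA(3) that unfolding okp_def I_def S_def by blast
  have ID: "I \<subseteq> D" using TA(2) unfolding I_def by force
  have SD: "S \<subseteq> D" using TA(2) unfolding S_def by force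
  have MI: "M \<subseteq> I" using TA(1) unfolding I_def T0_def by blast
  have dich: "x \<in> I \<or> x \<in> S" if x: "x \<in> D" for x
  proof (rule ccontr)
    assume nx: "\<not> (x \<in> I \<or> x \<in> S)"
    have "\<not> okp E (insert (True, x) T)"
    proof
      assume "okp E (insert (True, x) T)"
      then have "insert (True, x) T \<in> A" unfolding A_def using TA x by auto
      then have "insert (True, x) T = T" using T0(2) by blast
      then show False using nx unfolding I_def by blast
    qed
    then obtain B1 A1 where 1: "finite B1" "finite A1" "B1 \<subseteq> insert x I" "A1 \<subseteq> S" "\<not> sep E B1 A1"
      unfolding okp_def I_def S_def by auto
    have "\<not> okp E (insert (False, x) T)"
    proof
      assume "okp E (insert (False, x) T)"
      then have "insert (False, x) T \<in> A" unfolding A_def using TA x by auto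
      then have "insert (False, x) T = T" using T0(2) by blast
      then show False using nx unfolding S_def by blast
    qed
    then obtain B2 A2 where 2: "finite B2" "finite A2" "B2 \<subseteq> I" "A2 \<subseteq> insert x S" "\<not> sep E B2 A2"
      unfolding okp_def I_def S_def by auto
    have "sep E ((B1 - {x}) \<union> B2) (A1 \<union> (A2 - {x}))"
    proof (rule ok)
      show "finite ((B1 - {x}) \<union> B2)" "finite (A1 \<union> (A2 - {x}))" using 1 2 by auto
      show "(B1 - {x}) \<union> B2 \<subseteq> I" "A1 \<union> (A2 - {x}) \<subseteq> S" using 1(3,4) 2(3,4) by auto
    qed
    then obtain P where P: "P \<in> E" "(B1 - {x}) \<union> B2 \<subseteq> P" "(A1 \<union> (A2 - {x})) \<inter> P = {}" unfolding sep_def by blast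
    show False
    proof (cases "x \<in> P")
      case True
      then have "B1 \<subseteq> P" "A1 \<inter> P = {}" using P by auto
      then show False using 1(5) P(1) unfolding sep_def by blast
    next
      case False
      then have "B2 \<subseteq> P" "A2 \<inter> P = {}" using P by auto
      then show False using 2(5) P(1) unfolding sep_def by blast
    qed
  qed
  have nsep: "\<not> sep E B A" if "\<And>P. P \<in> E \<Longrightarrow> B \<subseteq> P \<Longrightarrow> A \<inter> P \<noteq> {}" for B A
    using that unfolding sep_def by blast
  have pb: "0 \<in> P" "1 \<notin> P" "is_ideal D P" "\<And>a b. a \<in> D \<Longrightarrow> b \<in> D \<Longrightarrow> a * b \<in> P \<Longrightarrow> a \<in> P \<or> b \<in> P"
    if "P \<in> E" for P
    using prime_basic[OF sD Epr[OF that]] Epr[OF that] unfolding prime_ideal_def by auto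
  have inS: "x \<in> S" if "x \<in> D" "x \<notin> I" for x using dich that by blast
  have "prime_ideal D I" unfolding prime_ideal_def
  proof (intro conjI ballI impI)
    show "is_ideal D I"
    proof (rule is_idealI)
      show "I \<subseteq> D" by (rule ID)
      show "0 \<in> I"
      proof (rule ccontr)
        assume "0 \<notin> I"
        then have "0 \<in> S" using inS sr0[OF sD] by blast
        then have "sep E {} {0}" using ok by simp
        moreover have "\<not> sep E {} {0}"
        proof (rule nsep)
          fix P assume "P \<in> E" then have "0 \<in> P" by (rule pb(1))
          then show "{0} \<inter> P \<noteq> {}" by blast
        qed
        ultimately show False by blast
      qed
      show "x + y \<in> I" if "x \<in> I" "y \<in> I" for x y
      proof (rule ccontr)
        assume "x + y \<notin> I"
        then have "x + y \<in> S" using inS sradd[OF sD] ID that by blast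
        then have "sep E {x, y} {x + y}" using ok that by simp
        moreover have "\<not> sep E {x, y} {x + y}"
        proof (rule nsep)
          fix P assume "P \<in> E" "{x, y} \<subseteq> P"
          then have "x + y \<in> P" using ideal_add[OF pb(3)[OF \<open>P \<in> E\<close>]] by simp
          then show "{x + y} \<inter> P \<noteq> {}" by blast
        qed
        ultimately show False by blast
      qed
      show "d * x \<in> I" if "d \<in> D" "x \<in> I" for d x
      proof (rule ccontr)
        assume "d * x \<notin> I"
        then have "d * x \<in> S" using inS srmult[OF sD] ID that by blast
        then have "sep E {x} {d * x}" using ok that by simp
        moreover have "\<not> sep E {x} {d * x}"
        proof (rule nsep)
          fix P assume "P \<in> E" "{x} \<subseteq> P"
          then have "d * x \<in> P" using ideal_mult[OF pb(3)[OF \<open>P \<in> E\<close>] \<open>d \<in> D\<close>] by simp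
          then show "{d * x} \<inter> P \<noteq> {}" by blast
        qed
        ultimately show False by blast
      qed
    qed
    show "I \<noteq> D"
    proof
      assume "I = D"
      then have "1 \<in> I" using sr1[OF sD] by simp
      then have "sep E {1} {}" using ok by simp
      moreover have "\<not> sep E {1} {}"
      proof (rule nsep)
        fix P assume "P \<in> E" "{1} \<subseteq> P"
        then show "{} \<inter> P \<noteq> {}" using pb(2)[OF \<open>P \<in> E\<close>] by simp
      qed
      ultimately show False by blast
    qed
    fix a b assume ab: "a \<in> D" "b \<in> D" "a * b \<in> I"
    show "a \<in> I \<or> b \<in> I"
    proof (rule ccontr)
      assume "\<not> (a \<in> I \<or> b \<in> I)"
      then have "a \<in> S" "b \<in> S" using inS ab by auto
      then have "sep E {a * b} {a, b}" using ok ab by simp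
      moreover have "\<not> sep E {a * b} {a, b}"
      proof (rule nsep)
        fix P assume "P \<in> E" "{a * b} \<subseteq> P"
        then have "a \<in> P \<or> b \<in> P" using pb(4)[OF \<open>P \<in> E\<close> ab(1,2)] by simp
        then show "{a, b} \<inter> P \<noteq> {}" by blast
      qed
      ultimately show False by blast
    qed
  qed
  then have IS: "I \<in> Spec D" using Spec_prime by blast
  have "I \<in> E"
  proof (rule ccontr)
    assume "I \<notin> E"
    then obtain B A where BA: "finite B" "finite A" "B \<subseteq> I" "A \<subseteq> D" "A \<inter> I = {}" "\<not> sep E B A"
      using cl[OF IS] by blast
    have "A \<subseteq> S" using BA(4,5) inS by blast
    then show False using ok[OF BA(1,2,3)] BA(6) by blast
  qed
  then show ?thesis using MI by blast
qed


lemma tmax_ideal: assumes sD: "subring D" and tm: "t_maximal D M" shows "is_ideal D M" "M \<noteq> D"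
proof -
  show "M \<noteq> D" using tm unfolding t_maximal_def by blast
  have t: "t_ideal D M" using tm unfolding t_maximal_def by blast
  show "is_ideal D M"
  proof (cases "M = {0}")
    case True
    show ?thesis unfolding True by (rule is_idealI) (use sr0[OF sD] in auto)
  next
    case False then show ?thesis using t unfolding t_ideal_def by blast
  qed
qed

lemma tmax_prime: assumes sD: "subring D" and tm: "t_maximal D M" and v: "valuation_domain (loc D M)"
  shows "prime_ideal D M"
proof -
  note im = tmax_ideal[OF sD tm]
  have sl: "subring (loc D M)" using v unfolding valuation_domain_def by blast
  have "a \<in> M \<or> b \<in> M" if ab: "a \<in> D" "b \<in> D" "a * b \<in> M" for a b
  proof (rule ccontr)
    assume n: "\<not> (a \<in> M \<or> b \<in> M)"
    have z: "0 \<in> M" using ideal_0[OF im(1)] .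
    have a0: "a \<noteq> 0" "b \<noteq> 0" using n z by auto
    have "1 / a \<in> loc D M" "1 / b \<in> loc D M" unfolding loc_def using ab n sr1[OF sD] by blast+
    then have "(1 / a) * (1 / b) \<in> loc D M" using srmult[OF sl] by blast
    then obtain c s where cs: "c \<in> D" "s \<in> D" "s \<notin> M" "(1 / a) * (1 / b) = c / s" unfolding loc_def by blast
    have "s \<noteq> 0" using cs z by auto
    then have "s = c * (a * b)" using cs(4) a0 by (simp add: field_simps)
    moreover have "c * (a * b) \<in> M" using ideal_mult[OF im(1) cs(1) ab(3)] .
    ultimately show False using cs(3) by simp
  qed
  then show ?thesis unfolding prime_ideal_def using im by blast
qed

lemma loc0: "loc D {0} = qfield D" unfolding loc_def qfield_def by simp

lemma dir1:
  assumes sD: "subring D" and pv: "PvMD D"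
  shows "essential D \<and> closedin (constructible_topology D) (E_set D)"
proof -
  have vM: "\<And>M. t_maximal D M \<Longrightarrow> valuation_domain (loc D M)" using pv unfolding PvMD_def by blast
  have one_M: "1 \<notin> M" "0 \<in> M" if "t_maximal D M" for M
    using tmax_ideal[OF sD that] ideal_one ideal_0 by blast+
  define FF where "FF = {loc D M | M. t_maximal D M}"
  have FFe: "\<forall>V\<in>FF. essential_valuation_overring D V"
  proof
    fix V assume "V \<in> FF"
    then obtain M where M: "t_maximal D M" "V = loc D M" unfolding FF_def by blast
    have "valuation_overring D V" unfolding valuation_overring_def M(2)
      using D_loc[OF sD one_M(1)[OF M(1)]] loc_sub_qf[OF one_M(2)[OF M(1)]] vM[OF M(1)] by blast
    moreover have "prime_ideal D M" using tmax_prime[OF sD M(1) vM[OF M(1)]] .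
    ultimately show "essential_valuation_overring D V" unfolding essential_valuation_overring_def using M(2) by blast
  qed
  have "D = qfield D \<inter> \<Inter>FF"
  proof
    show "D \<subseteq> qfield D \<inter> \<Inter>FF"
    proof
      fix x assume x: "x \<in> D"
      have "x \<in> V" if "V \<in> FF" for V
      proof -
        obtain M where M: "t_maximal D M" "V = loc D M" using \<open>V \<in> FF\<close> unfolding FF_def by blast
        show ?thesis using D_loc[OF sD one_M(1)[OF M(1)]] x M(2) by blast
      qed
      then show "x \<in> qfield D \<inter> \<Inter>FF" using D_qf[OF sD] x by blast
    qed
    show "qfield D \<inter> \<Inter>FF \<subseteq> D"
    proof
      fix x assume x: "x \<in> qfield D \<inter> \<Inter>FF"
      show "x \<in> D"
      proof (rule ccontr)
        assume xD: "x \<notin> D"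
        define I where "I = {d \<in> D. d * x \<in> D}"
        have iI: "is_ideal D I"
        proof (rule is_idealI)
          show "I \<subseteq> D" unfolding I_def by blast
          show "0 \<in> I" unfolding I_def using sr0[OF sD] by simp
          show "u + v \<in> I" if "u \<in> I" "v \<in> I" for u v
            using that sradd[OF sD] unfolding I_def by (simp add: distrib_right)
          show "d * u \<in> I" if "d \<in> D" "u \<in> I" for d u
            using that srmult[OF sD] unfolding I_def by (simp add: mult.assoc)
        qed
        obtain a b where ab: "a \<in> D" "b \<in> D" "b \<noteq> 0" "x = a / b" using x unfolding qfield_def by blast
        have bI: "b \<in> I" unfolding I_def using ab by simp
        have Inz: "I \<noteq> {0}" using bI ab(3) by blast
        have gI: "good D I" unfolding good_def
        proof (intro allI impI)
          fix F assume F: "finite F \<and> F \<subseteq> I \<and> gen D F \<noteq> {0}"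
          show "1 \<notin> v_op D (gen D F)"
          proof
            assume one: "1 \<in> v_op D (gen D F)"
            have "x * f \<in> D" if "f \<in> F" for f using that F unfolding I_def by (auto simp: mult.commute)
            then have "x \<in> colon D (gen D F)" using colon_gen[OF sD] F x by blast
            then have "1 * x \<in> D" using one unfolding v_op_def colon_def[of D "colon D (gen D F)"] by blast
            then show False using xD by simp
          qed
        qed
        obtain M where M: "t_maximal D M" "I \<subseteq> M" using tmax_exists[OF sD iI Inz gI] by blast
        have "x \<in> loc D M" using x M(1) unfolding FF_def by blast
        then obtain a' s where as: "a' \<in> D" "s \<in> D" "s \<notin> M" "x = a' / s" unfolding loc_def by blast
        have "s \<noteq> 0" using as one_M(2)[OF M(1)] by auto
        then have "s * x = a'" using as by simp
        then have "s \<in> I" unfolding I_def using as by simp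
        then show False using M(2) as(3) by blast
      qed
    qed
  qed
  then have ess: "essential D" unfolding essential_def using FFe by blast
  define V where "V = \<Union>{NB D F | F. finite F \<and> F \<noteq> {} \<and> F \<subseteq> D \<and> gen D F \<noteq> {0} \<and> 1 \<in> v_op D (gen D F)}"
  have gV: "generate_topology_on (bas D) V" unfolding V_def
    by (rule generate_topology_on.UN) (use NB_open in blast)
  have ES: "E_set D \<subseteq> Spec D" unfolding E_set_def by blast
  have "Spec D - E_set D = V \<inter> Spec D"
  proof
    show "Spec D - E_set D \<subseteq> V \<inter> Spec D"
    proof
      fix Q assume Q: "Q \<in> Spec D - E_set D"
      have pQ: "prime_ideal D Q" using Q Spec_prime by blast
      have QnE: "\<not> valuation_domain (loc D Q)" using Q pQ E_iff by blast
      have Qnz: "Q \<noteq> {0}" using QnE loc0 val_qf[OF sD] by metis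
      have iQ: "is_ideal D Q" using pQ unfolding prime_ideal_def by blast
      have "\<not> good D Q"
      proof
        assume "good D Q"
        then obtain M where M: "t_maximal D M" "Q \<subseteq> M" using tmax_exists[OF sD iQ Qnz] by blast
        then have "valuation_domain (loc D Q)" using val_over[OF sD pQ M(2) one_M(1)[OF M(1)] vM[OF M(1)]] by blast
        then show False using QnE by blast
      qed
      then obtain F where F: "finite F" "F \<subseteq> Q" "gen D F \<noteq> {0}" "1 \<in> v_op D (gen D F)"
        unfolding good_def by blast
      have "F \<noteq> {}" using gen_nz[OF sD F(3)] by blast
      moreover have "F \<subseteq> D" using F(2) prime_basic(3)[OF sD pQ] by blast
      moreover have "Q \<in> NB D F" unfolding NB_def using Q F(2) by blast
      ultimately show "Q \<in> V \<inter> Spec D" unfolding V_def using F Q by blast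
    qed
    show "V \<inter> Spec D \<subseteq> Spec D - E_set D"
    proof
      fix P assume P: "P \<in> V \<inter> Spec D"
      then obtain F where F: "finite F" "F \<subseteq> D" "gen D F \<noteq> {0}" "1 \<in> v_op D (gen D F)" "P \<in> NB D F"
        unfolding V_def by blast
      have FP: "F \<subseteq> P" using F(5) unfolding NB_def by blast
      have "P \<notin> E_set D"
      proof
        assume "P \<in> E_set D"
        then have pP: "prime_ideal D P" "valuation_domain (loc D P)" using E_iff by blast+
        have "1 \<in> P" using hf[OF sD pP F(1) FP F(3,4)] .
        then show False using prime_basic(2)[OF sD pP(1)] by blast
      qed
      then show "P \<in> Spec D - E_set D" using P by blast
    qed
  qed
  then have "closedin (constructible_topology D) (E_set D)" unfolding closed_ct[OF sD] using ES gV by blast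
  then show ?thesis using ess by blast
qed

lemma dir2:
  assumes sD: "subring D" and asm: "essential D \<and> closedin (constructible_topology D) (E_set D)"
  shows "PvMD D"
proof -
  obtain FF where FF: "\<forall>V\<in>FF. essential_valuation_overring D V" "D = qfield D \<inter> \<Inter>FF"
    using asm unfolding essential_def by blast
  obtain V where V: "generate_topology_on (bas D) V" "Spec D - E_set D = V \<inter> Spec D"
    and ES: "E_set D \<subseteq> Spec D"
    using asm unfolding closed_ct[OF sD] by blast
  show ?thesis unfolding PvMD_def
  proof (intro allI impI)
    fix M assume tm: "t_maximal D M"
    show "valuation_domain (loc D M)"
    proof (cases "M = {0}")
      case True then show ?thesis by (simp add: loc0 val_qf[OF sD])
    next
      case False
      have "t_ideal D M" using tm unfolding t_maximal_def by blast
      then have iM: "is_ideal D M" "t_op D M = M" using False unfolding t_ideal_def by blast+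
      have MnD: "M \<noteq> D" using tm unfolding t_maximal_def by blast
      have MD: "M \<subseteq> D" using ideal_sub[OF iM(1)] .
      have cl: "\<exists>B A. finite B \<and> finite A \<and> B \<subseteq> Q \<and> A \<subseteq> D \<and> A \<inter> Q = {} \<and> \<not> sep (E_set D) B A"
        if Q: "Q \<in> Spec D" "Q \<notin> E_set D" for Q
      proof -
        have QV: "Q \<in> V" using V(2) Q by blast
        obtain B A where BA: "finite B" "finite A" "B \<subseteq> Q" "A \<subseteq> D" "A \<inter> Q = {}"
          "{P \<in> Spec D. B \<subseteq> P \<and> A \<inter> P = {}} \<subseteq> V"
          using nbhd[OF V(1) QV] by blast
        have "\<not> sep (E_set D) B A"
        proof
          assume "sep (E_set D) B A"
          then obtain P where P: "P \<in> E_set D" "B \<subseteq> P" "A \<inter> P = {}" unfolding sep_def by blast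
          then have "P \<in> V \<inter> Spec D" using BA(6) ES by blast
          then show False using V(2) P(1) by blast
        qed
        then show ?thesis using BA by blast
      qed
      have fip: "\<exists>P\<in>E_set D. B \<subseteq> P" if B: "finite B" "B \<subseteq> M" for B
      proof (rule ccontr)
        assume nB: "\<not> (\<exists>P\<in>E_set D. B \<subseteq> P)"
        obtain m0 where m0: "m0 \<in> M" "m0 \<noteq> 0" using False ideal_0[OF iM(1)] by blast
        define F where "F = insert m0 B"
        have Ff: "finite F" and FM: "F \<subseteq> M" using B m0 unfolding F_def by auto
        have FD: "F \<subseteq> D" using FM MD by blast
        have gF: "gen D F \<noteq> {0}" using gen_nz2[OF sD Ff, of m0] m0 unfolding F_def by blast
        have cD: "colon D (gen D F) \<subseteq> D"
        proof
          fix y assume y: "y \<in> colon D (gen D F)"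
          have yq: "y \<in> qfield D" using y colon_sub by blast
          have "y \<in> W" if W: "W \<in> FF" for W
          proof -
            have "essential_valuation_overring D W" using FF(1) W by blast
            then obtain P where P: "prime_ideal D P" "W = loc D P" "valuation_domain W"
              unfolding essential_valuation_overring_def valuation_overring_def by blast
            then have "P \<in> E_set D" using E_iff by blast
            then obtain f where f: "f \<in> B" "f \<notin> P" using nB by blast
            have fF: "f \<in> F" using f unfolding F_def by blast
            have "f \<in> D" using fF FD by blast
            have yf: "y * f \<in> D" using colon_gen_D[OF sD Ff y fF] .
            have "f \<noteq> 0" using f(2) prime_basic(1)[OF sD P(1)] by auto
            then have "y = (y * f) / f" by simp
            then show "y \<in> W" unfolding P(2) loc_def using yf \<open>f \<in> D\<close> f(2) by blast
          qed
          then show "y \<in> D" using FF(2) yq by blast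
        qed
        have "1 \<in> v_op D (gen D F)"
        proof -
          have "1 \<in> qfield D" using D_qf[OF sD] sr1[OF sD] by blast
          moreover have "\<forall>y\<in>colon D (gen D F). 1 * y \<in> D" using cD by auto
          ultimately show ?thesis unfolding v_op_def colon_def[of D "colon D (gen D F)"] by blast
        qed
        then have "1 \<in> t_op D M" unfolding t_op_iff using Ff FM gF by blast
        then have "1 \<in> M" using iM(2) by simp
        then show False using ideal_one[OF iM(1)] MnD by blast
      qed
      obtain P where P: "P \<in> E_set D" "M \<subseteq> P" using patch[OF sD ES cl MD fip] by blast
      have pP: "prime_ideal D P" "valuation_domain (loc D P)" using P(1) E_iff by blast+
      have Pnz: "P \<noteq> {0}" using P(2) False ideal_0[OF iM(1)] by blast
      have iP: "is_ideal D P" using pP(1) unfolding prime_ideal_def by blast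
      have "t_op D P \<subseteq> P"
      proof
        fix x assume "x \<in> t_op D P"
        then obtain F where F: "finite F" "F \<subseteq> P" "gen D F \<noteq> {0}" "x \<in> v_op D (gen D F)" unfolding t_op_iff by blast
        show "x \<in> P" using hf[OF sD pP F] .
      qed
      then have "t_op D P = P" using ideal_sub_t[OF sD iP Pnz] by blast
      then have "t_ideal D P" unfolding t_ideal_def using iP Pnz by blast
      moreover have "P \<noteq> D" using pP(1) unfolding prime_ideal_def by blast
      ultimately have "P = M" using tm P(2) unfolding t_maximal_def by blast
      then show ?thesis using pP(2) by simp
    qed
  qed
qed

theorem corollary2p6:
  fixes D :: "'a::field set"
  assumes "subring D"
  shows "PvMD D \<longleftrightarrow> essential D \<and> closedin (constructible_topology D) (E_set D)"
  using dir1[OF assms] dir2[OF assms] by blast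

end
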